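(* In $\mathbf H^{\mathrm{gr}}_N[c_1,\dots,c_{l-1}]$, for each $i=1,\dots,N$, $$\prod_{k=1}^{l}\Big(w_i-\hbar-z_k+\mathbf t\sum_{j>i}s_{ij}\Big)=\sum_{p=0}^{l}\mathbf t^p\sum_{0=k_0<k_1<\dots<k_p\le l}\ \sum_{i=i_0<i_1<\dots<i_p\le N}\ \prod_{r=0}^{p}\ \prod_{k=k_r+1}^{k_{r+1}-1}(w_{i_r}-\hbar-z_k)\cdot s_{i_{p-1},i_p}s_{i_{p-2},i_{p-1}}\cdots s_{i_1,i_2}s_{i_0,i_1},$$ where on the left the factors are multiplied in the order $k=1,\dots,l$ from left to right, on the right $k_{p+1}:=l+1$, and for $p=0$ the product of transpositions is $1$.
   Context: $\mathbf H^{\mathrm{gr}}_N$ is the $\mathbb C[\hbar,\mathbf t]$-algebra generated by $s_1,\dots,s_{N-1}$, $X_1^{\pm1},\dots,X_N^{\pm1}$, $w_1,\dots,w_N$ with relations: the $w_i$ commute pairwise, the $X_i$ commute pairwise, $X_iX_i^{-1}=X_i^{-1}X_i=1$; the $s_i$ satisfy the Coxeter relations of $\mathfrak S_N$ ($s_{ij}$ denotes the transposition $(ij)$); $s_iw_i=w_{i+1}s_i-\mathbf t$, $s_iw_{i+1}=w_is_i+\mathbf t$, $s_iw_j=w_js_i$ ($j\ne i,i+1$); $\sigma X_i^{\pm1}=X_{\sigma(i)}^{\pm1}\sigma$; $[w_i,X_j]=-\mathbf tX_js_{ji}$ ($i>j$), $-\mathbf tX_is_{ij}$ ($i<j$), $[w_i,X_i]=-\hbar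 X_i+\mathbf t\sum_{k<i}X_ks_{ki}+\mathbf t\sum_{k>i}X_is_{ik}$. $\mathbf H^{\mathrm{gr}}_N[c_1,\dots,c_{l-1}]$ is its extension of scalars by indeterminates $c_1,\dots,c_{l-1}$. Here $l\ge1$, $\varepsilon$ is a primitive $l$-th root of unity, and $z_k=-l^{-1}\big((l-k)\hbar+\sum_{m=1}^{l-1}(1+\varepsilon^m+\dots+\varepsilon^{(k-1)m})c_m\big)$ for $k=1,\dots,l$. *)

theory Defs
  imports Complex_Main "HOL-Combinatorics.Transposition" "HOL-Combinatorics.Permutations"
begin

text \<open>An algebra over C[hbar,t,c_1..c_(l-1)] is modelled as a ring A of type 'a
 together with a ring homomorphism emb from the complex numbers into the centre of A
 and central elements hb, tt, c m.\<close>

definition zk :: "(complex \<Rightarrow> 'a::ring_1) \<Rightarrow> 'a \<Rightarrow> (nat \<Rightarrow> 'a) \<Rightarrow> complex \<Rightarrow> nat \<Rightarrow> nat \<Rightarrow> 'a" where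
  "zk emb hb c eps l k =
     - (emb (1 / of_nat l) *
        (of_nat (l - k) * hb + (\<Sum>m = 1..<l. emb (\<Sum>q<k. eps ^ (q * m)) * c m)))"

definition kseqs :: "nat \<Rightarrow> nat \<Rightarrow> nat list set" where
  "kseqs l p = {ks. length ks = p \<and> sorted_wrt (<) (0 # ks) \<and> set ks \<subseteq> {1..l}}"

definition iseqs :: "nat \<Rightarrow> nat \<Rightarrow> nat \<Rightarrow> nat list set" where
  "iseqs N i p = {js. length js = p \<and> sorted_wrt (<) (i # js) \<and> set js \<subseteq> {1..N}}"

end

theory Submission
  imports Defs
begin

locale hk =
  fixes T :: "(nat \<Rightarrow> nat) \<Rightarrow> 'a::ring_1" and w :: "nat \<Rightarrow> 'a" and tt :: 'a and N :: nat
  assumes T_id: "T id = 1"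
    and T_comp: "\<And>\<sigma> \<tau>. \<sigma> permutes {1..N} \<Longrightarrow> \<tau> permutes {1..N} \<Longrightarrow> T (\<sigma> \<circ> \<tau>) = T \<sigma> * T \<tau>"
    and sw1: "\<And>a. 1 \<le> a \<Longrightarrow> a < N \<Longrightarrow> T (transpose a (a+1)) * w a = w (a+1) * T (transpose a (a+1)) - tt"
    and sw2: "\<And>a. 1 \<le> a \<Longrightarrow> a < N \<Longrightarrow> T (transpose a (a+1)) * w (a+1) = w a * T (transpose a (a+1)) + tt"
    and sw3: "\<And>a b. 1 \<le> a \<Longrightarrow> a < N \<Longrightarrow> b \<in> {1..N} \<Longrightarrow> b \<noteq> a \<Longrightarrow> b \<noteq> a + 1 \<Longrightarrow>
                T (transpose a (a+1)) * w b = w b * T (transpose a (a+1))"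
    and tt_central: "\<And>x. tt * x = x * tt"
begin

definition s where "s a b = T (transpose a b)"
definition y where "y a = w a - tt * (\<Sum>k=1..<a. s k a)"
definition J where "J a = (\<Sum>m\<in>{1..N}-{a}. s a m)"
definition D where "D a = (\<Sum>m=a+1..N. s a m)"

lemma sw1s: "1 \<le> a \<Longrightarrow> a < N \<Longrightarrow> s a (a+1) * w a = w (a+1) * s a (a+1) - tt"
  using sw1 unfolding s_def .
lemma sw2s: "1 \<le> a \<Longrightarrow> a < N \<Longrightarrow> s a (a+1) * w (a+1) = w a * s a (a+1) + tt"
  using sw2 unfolding s_def .
lemma sw3s: "1 \<le> a \<Longrightarrow> a < N \<Longrightarrow> b \<in> {1..N} \<Longrightarrow> b \<noteq> a \<Longrightarrow> b \<noteq> a + 1 \<Longrightarrow> s a (a+1) * w b = w b * s a (a+1)"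
  using sw3 unfolding s_def .

lemma s_comm: "s a b = s b a" by (simp add: s_def transpose_commute)

lemma ss: "a \<in> {1..N} \<Longrightarrow> b \<in> {1..N} \<Longrightarrow> s a b * s a b = 1"
  unfolding s_def
  by (metis T_comp T_id permutes_swap_id transpose_comp_involutory)

lemma conj: assumes "a \<in> {1..N}" "b \<in> {1..N}" "c \<in> {1..N}" "d \<in> {1..N}"
  shows "s a b * s c d = s (transpose a b c) (transpose a b d) * s a b"
proof -
  have e: "transpose a b \<circ> transpose c d = transpose (transpose a b c) (transpose a b d) \<circ> transpose a b"
    by (simp add: fun_eq_iff transpose_def)
  have m: "transpose a b c \<in> {1..N}" "transpose a b d \<in> {1..N}"
    using assms by (auto simp: transpose_def)
  show ?thesis unfolding s_def
    by (metis T_comp e assms m permutes_swap_id)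
qed

lemma tt_sum: "x * (tt * z) = tt * (x * z)"
  by (metis mult.assoc tt_central)

lemma y_adj: assumes a: "1 \<le> a" "a < N" and b: "b \<in> {1..N}"
  shows "s a (a+1) * y b = y (transpose a (a+1) b) * s a (a+1)"
proof -
  let ?\<sigma> = "transpose a (a+1)"
  have A: "a \<in> {1..N}" "a+1 \<in> {1..N}" using a by auto
  have L: "s a (a+1) * y b = s a (a+1) * w b - tt * (\<Sum>k=1..<b. s (?\<sigma> k) (?\<sigma> b) * s a (a+1))"
  proof -
    have "s a (a+1) * (\<Sum>k=1..<b. s k b) = (\<Sum>k=1..<b. s (?\<sigma> k) (?\<sigma> b) * s a (a+1))"
      unfolding sum_distrib_left
      by (rule sum.cong[OF refl], rule conj) (use A b in auto)
    then show ?thesis unfolding y_def by (simp add: right_diff_distrib tt_sum)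
  qed
  consider "b = a" | "b = a+1" | "b \<noteq> a \<and> b \<noteq> a+1" by blast
  then show ?thesis
  proof cases
    case 1
    have "(\<Sum>k=1..<b. s (?\<sigma> k) (?\<sigma> b) * s a (a+1)) = (\<Sum>k=1..<a. s k (a+1) * s a (a+1))"
      using 1 by (intro sum.cong) auto
    moreover have "(\<Sum>k=1..<a+1. s k (a+1)) * s a (a+1) = (\<Sum>k=1..<a. s k (a+1) * s a (a+1)) + 1"
      using a ss[OF A] by (simp add: sum_distrib_right distrib_right)
    ultimately show ?thesis using L 1 sw1s[OF a] unfolding y_def
      by (simp add: algebra_simps)
  next
    case 2
    have "(\<Sum>k=1..<b. s (?\<sigma> k) (?\<sigma> b) * s a (a+1)) = (\<Sum>k=1..<a. s k a * s a (a+1)) + 1"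
      using 2 a ss[OF A] s_comm[of "Suc a" a] by simp
    moreover have "(\<Sum>k=1..<a. s k a) * s a (a+1) = (\<Sum>k=1..<a. s k a * s a (a+1))"
      by (simp add: sum_distrib_right)
    ultimately show ?thesis using L 2 sw2s[OF a] unfolding y_def
      by (simp add: algebra_simps)
  next
    case 3
    then have sb: "?\<sigma> b = b" by simp
    have "(\<Sum>k=1..<b. s (?\<sigma> k) b * s a (a+1)) = (\<Sum>k=1..<b. s k b * s a (a+1))"
    proof (cases "b \<le> a")
      case True
      then show ?thesis by (intro sum.cong) auto
    next
      case False
      then have "?\<sigma> permutes {1..<b}" using 3 a by (intro permutes_swap_id) auto
      then show ?thesis by (subst sum.permute[of ?\<sigma>]) (auto simp: o_def)
    qed
    then show ?thesis using L sb sw3s[OF a b] 3 unfolding y_def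
      by (simp add: algebra_simps sum_distrib_right)
  qed
qed

lemma y_tr_aux: "1 \<le> i \<Longrightarrow> i+1+d \<le> N \<Longrightarrow> s i (i+1+d) * y i = y (i+1+d) * s i (i+1+d)"
proof (induction d)
  case 0
  then show ?case using y_adj[of i i] by simp
next
  case (Suc d)
  let ?j = "i+1+d"
  have IH: "s i ?j * y i = y ?j * s i ?j" using Suc by simp
  have e: "transpose i (?j+1) = transpose ?j (?j+1) \<circ> transpose i ?j \<circ> transpose ?j (?j+1)"
    by (simp add: fun_eq_iff transpose_def)
  have P: "transpose ?j (?j+1) permutes {1..N}" "transpose i ?j permutes {1..N}"
    using Suc.prems by (auto intro!: permutes_swap_id)
  have se: "s i (?j+1) = s ?j (?j+1) * s i ?j * s ?j (?j+1)"
    unfolding s_def e using P by (simp add: T_comp permutes_compose)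
  have c1: "s ?j (?j+1) * y i = y i * s ?j (?j+1)"
    using y_adj[of ?j i] Suc.prems by simp
  have c2: "s ?j (?j+1) * y ?j = y (?j+1) * s ?j (?j+1)"
    using y_adj[of ?j ?j] Suc.prems by simp
  have "s i (?j+1) * y i = s ?j (?j+1) * s i ?j * (s ?j (?j+1) * y i)"
    by (subst se) (simp add: mult.assoc)
  also have "\<dots> = s ?j (?j+1) * (s i ?j * y i) * s ?j (?j+1)" unfolding c1 by (simp add: mult.assoc)
  also have "\<dots> = (s ?j (?j+1) * y ?j) * s i ?j * s ?j (?j+1)" unfolding IH by (simp add: mult.assoc)
  also have "\<dots> = y (?j+1) * s i (?j+1)" unfolding c2 se by (simp add: mult.assoc)
  finally show ?case by simp
qed

lemma y_tr: "1 \<le> i \<Longrightarrow> i < j \<Longrightarrow> j \<le> N \<Longrightarrow> s i j * y i = y j * s i j"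
  using y_tr_aux[of i "j - i - 1"] by simp

lemma J_tr: assumes "i \<in> {1..N}" "j \<in> {1..N}" shows "s i j * J i = J j * s i j"
proof -
  let ?\<sigma> = "transpose i j"
  have "s i j * J i = (\<Sum>m\<in>{1..N}-{i}. s j (?\<sigma> m) * s i j)"
    unfolding J_def sum_distrib_left
    by (rule sum.cong[OF refl]) (use assms in \<open>auto simp: conj\<close>)
  also have "\<dots> = (\<Sum>m\<in>{1..N}-{j}. s j m * s i j)"
  proof (rule sum.reindex_bij_betw)
    show "bij_betw ?\<sigma> ({1..N} - {i}) ({1..N} - {j})"
    proof (rule bij_betw_imageI)
      show "inj_on ?\<sigma> ({1..N} - {i})" by simp
      show "?\<sigma> ` ({1..N} - {i}) = {1..N} - {j}"
        using assms by (auto simp: transpose_def image_iff)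
    qed
  qed
  also have "\<dots> = J j * s i j" unfolding J_def by (simp add: sum_distrib_right)
  finally show ?thesis .
qed

lemma wD: assumes "a \<in> {1..N}" shows "w a + tt * D a = y a + tt * J a"
proof -
  have e: "{1..N}-{a} = {1..<a} \<union> {a+1..N}" using assms by auto
  have "J a = (\<Sum>m=1..<a. s a m) + D a"
    unfolding J_def D_def e by (rule sum.union_disjoint) auto
  moreover have "(\<Sum>m=1..<a. s a m) = (\<Sum>m=1..<a. s m a)" by (simp add: s_comm)
  ultimately show ?thesis unfolding y_def by (simp add: algebra_simps)
qed

lemma key: assumes "i \<in> {1..N}" "j \<in> {1..N}" "i < j"
  shows "s i j * (w i + tt * D i) = (w j + tt * D j) * s i j"
proof -
  have "s i j * (w i + tt * D i) = s i j * y i + tt * (s i j * J i)"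
    using wD[OF assms(1)] by (simp add: distrib_left tt_sum)
  also have "\<dots> = (y j + tt * J j) * s i j"
    using y_tr[of i j] J_tr[OF assms(1,2)] assms by (simp add: distrib_right mult.assoc)
  also have "\<dots> = (w j + tt * D j) * s i j" using wD[OF assms(2)] by simp
  finally show ?thesis .
qed

end

definition trm :: "(nat \<Rightarrow> nat \<Rightarrow> 'a::ring_1) \<Rightarrow> (nat \<Rightarrow> nat \<Rightarrow> 'a) \<Rightarrow> nat \<Rightarrow> nat \<Rightarrow> nat \<Rightarrow> nat list \<Rightarrow> nat list \<Rightarrow> 'a" where
"trm A S l i k0 ks js = (let kk = (\<lambda>r. (k0 # ks @ [l+1]) ! r); ii = (\<lambda>r. (i # js) ! r) in
   prod_list (map (\<lambda>r. prod_list (map (\<lambda>k. A (ii r) k) [kk r + 1..<kk (r+1)])) [0..<length ks+1])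
   * prod_list (map (\<lambda>r. S (ii r) (ii (r+1))) (rev [0..<length ks])))"

definition KS :: "nat \<Rightarrow> nat \<Rightarrow> nat \<Rightarrow> nat list set" where
  "KS l k0 p = {ks. length ks = p \<and> sorted_wrt (<) (k0 # ks) \<and> set ks \<subseteq> {1..l}}"

lemma upt0: "[0..<Suc n] = 0 # map Suc [0..<n]"
  by (simp add: map_Suc_upt upt_conv_Cons)

lemma trm_nil: "trm A S l i k0 [] [] = prod_list (map (A i) [k0+1..<l+1])"
  by (simp add: trm_def)

lemma trm_cons: "length ks = length js \<Longrightarrow>
  trm A S l i k0 (k#ks) (j#js) = prod_list (map (A i) [k0+1..<k]) * trm A S l j k ks js * S i j"
  unfolding trm_def Let_def
  by (simp add: upt0 o_def rev_map mult.assoc del: upt_Suc)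

lemma KS_fin: "finite (KS l k0 p)"
proof -
  have "KS l k0 p \<subseteq> {xs. set xs \<subseteq> {1..l} \<and> length xs = p}" by (auto simp: KS_def)
  then show ?thesis by (rule finite_subset) (rule finite_lists_length_eq, simp)
qed

lemma iseqs_fin: "finite (iseqs N i p)"
proof -
  have "iseqs N i p \<subseteq> {xs. set xs \<subseteq> {1..N} \<and> length xs = p}" by (auto simp: iseqs_def)
  then show ?thesis by (rule finite_subset) (rule finite_lists_length_eq, simp)
qed

lemma KS_0: "KS l k0 0 = {[]}" by (auto simp: KS_def)
lemma iseqs_0: "iseqs N i 0 = {[]}" by (auto simp: iseqs_def)

lemma sorted_len: "sorted_wrt (<) (k0 # ks) \<Longrightarrow> set ks \<subseteq> {1..l} \<Longrightarrow> ks \<noteq> [] \<Longrightarrow> k0 + length ks \<le> l"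
proof (induction ks arbitrary: k0)
  case Nil
  then show ?case by simp
next
  case (Cons k ks)
  have "k0 < k" using Cons.prems by auto
  show ?case
  proof (cases "ks = []")
    case True
    then show ?thesis using Cons.prems by auto
  next
    case False
    then have "k + length ks \<le> l" using Cons by auto
    then show ?thesis using \<open>k0 < k\<close> by simp
  qed
qed

lemma KS_empty: "0 < p \<Longrightarrow> l < k0 + p \<Longrightarrow> KS l k0 p = {}"
  using sorted_len by (fastforce simp: KS_def)

lemma KS_split: assumes "k0 < l"
  shows "KS l k0 (Suc q) = KS l (k0+1) (Suc q) \<union> Cons (k0+1) ` KS l (k0+1) q"
proof (intro equalityI subsetI)
  fix ks assume "ks \<in> KS l k0 (Suc q)"
  then obtain k ks' where ks: "ks = k # ks'" and h: "length ks' = q" "sorted_wrt (<) (k0 # k # ks')"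
     "set (k#ks') \<subseteq> {1..l}" by (auto simp: KS_def length_Suc_conv)
  show "ks \<in> KS l (k0+1) (Suc q) \<union> Cons (k0+1) ` KS l (k0+1) q"
  proof (cases "k = k0+1")
    case True
    then show ?thesis using h ks by (auto simp: KS_def)
  next
    case False
    then show ?thesis using h ks by (auto simp: KS_def)
  qed
next
  fix ks assume "ks \<in> KS l (k0+1) (Suc q) \<union> Cons (k0+1) ` KS l (k0+1) q"
  then show "ks \<in> KS l k0 (Suc q)" using assms by (auto simp: KS_def) (force simp: subset_iff)+
qed

lemma iseqs_Suc: "iseqs N i (Suc q) = (\<lambda>(j,js). j # js) ` (SIGMA j:{i+1..N}. iseqs N j q)"
proof (intro equalityI subsetI)
  fix x assume "x \<in> iseqs N i (Suc q)"
  then obtain j js where "x = j # js" "length js = q" "sorted_wrt (<) (i # j # js)" "set (j#js) \<subseteq> {1..N}"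
    by (auto simp: iseqs_def length_Suc_conv)
  then show "x \<in> (\<lambda>(j,js). j # js) ` (SIGMA j:{i+1..N}. iseqs N j q)"
    by (auto simp: iseqs_def image_iff)
next
  fix x assume "x \<in> (\<lambda>(j,js). j # js) ` (SIGMA j:{i+1..N}. iseqs N j q)"
  then show "x \<in> iseqs N i (Suc q)" by (fastforce simp: iseqs_def Suc_le_eq intro: less_trans)
qed

lemma sum_iseqs_Suc: "(\<Sum>js\<in>iseqs N i (Suc q). h js) = (\<Sum>j=i+1..N. \<Sum>js\<in>iseqs N j q. h (j # js))"
proof -
  have inj: "inj_on (\<lambda>(j,js). j # js) (SIGMA j:{i+1..N}. iseqs N j q)"
    by (auto simp: inj_on_def)
  show ?thesis
    unfolding iseqs_Suc sum.reindex[OF inj]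
    by (subst sum.Sigma) (auto simp: iseqs_fin split_def)
qed

lemma sum_KS_Suc: assumes "k0 < l"
  shows "(\<Sum>ks\<in>KS l k0 (Suc q). g ks) = (\<Sum>ks\<in>KS l (k0+1) (Suc q). g ks) + (\<Sum>ks\<in>KS l (k0+1) q. g ((k0+1) # ks))"
proof -
  have d: "KS l (k0+1) (Suc q) \<inter> Cons (k0+1) ` KS l (k0+1) q = {}" by (auto simp: KS_def)
  show ?thesis unfolding KS_split[OF assms]
    by (subst sum.union_disjoint[OF KS_fin finite_imageI[OF KS_fin] d]) (simp add: sum.reindex)
qed

definition G where "G A S l N i k0 p = (\<Sum>ks\<in>KS l k0 p. \<Sum>js\<in>iseqs N i p. trm A S l i k0 ks js)"
definition E where "E A S tt l N i k0 = (\<Sum>p=0..l. tt^p * G A S l N i k0 p)"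

lemma trm_shift: assumes "k0 < l" "ks \<in> KS l (k0+1) p" "length js = p"
  shows "trm A S l i k0 ks js = A i (k0+1) * trm A S l i (k0+1) ks js"
proof (cases ks)
  case Nil
  then have "js = []" using assms by (auto simp: KS_def)
  then show ?thesis using Nil assms(1) by (simp add: trm_nil upt_conv_Cons del: upt_Suc)
next
  case (Cons k ks')
  then obtain j js' where js: "js = j # js'" using assms by (cases js) (auto simp: KS_def)
  have "k0 + 1 < k" using assms Cons by (auto simp: KS_def)
  then show ?thesis using Cons js assms
    by (simp add: trm_cons KS_def upt_conv_Cons mult.assoc del: upt_Suc)
qed

lemma G0: "k0 < l \<Longrightarrow> G A S l N i k0 0 = A i (k0+1) * G A S l N i (k0+1) 0"
  by (simp add: G_def KS_0 iseqs_0 trm_nil upt_conv_Cons del: upt_Suc)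

lemma GSuc: assumes "k0 < l"
  shows "G A S l N i k0 (Suc q) = A i (k0+1) * G A S l N i (k0+1) (Suc q) + (\<Sum>j=i+1..N. G A S l N j (k0+1) q * S i j)"
proof -
  have 1: "(\<Sum>ks\<in>KS l (k0+1) (Suc q). \<Sum>js\<in>iseqs N i (Suc q). trm A S l i k0 ks js)
        = A i (k0+1) * G A S l N i (k0+1) (Suc q)"
    unfolding G_def sum_distrib_left
    by (intro sum.cong refl trm_shift[OF assms]) (auto simp: iseqs_def)
  have 2: "(\<Sum>ks\<in>KS l (k0+1) q. \<Sum>js\<in>iseqs N i (Suc q). trm A S l i k0 ((k0+1)#ks) js)
        = (\<Sum>ks\<in>KS l (k0+1) q. \<Sum>j=i+1..N. \<Sum>js\<in>iseqs N j q. trm A S l j (k0+1) ks js * S i j)"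
    unfolding sum_iseqs_Suc
    by (intro sum.cong refl) (auto simp: trm_cons KS_def iseqs_def)
  have 3: "\<dots> = (\<Sum>j=i+1..N. G A S l N j (k0+1) q * S i j)"
    unfolding G_def sum_distrib_right
    by (subst sum.swap) simp
  show ?thesis unfolding G_def[of _ _ _ _ _ k0] sum_KS_Suc[OF assms] 1 2 3 ..
qed

lemma E_rec: assumes "k0 < l" and ttc: "\<And>x. tt * x = x * tt"
  shows "E A S tt l N i k0 = A i (k0+1) * E A S tt l N i (k0+1) + tt * (\<Sum>j=i+1..N. E A S tt l N j (k0+1) * S i j)"
proof -
  have pc: "tt^p * x = x * tt^p" for p x
    by (induction p) (simp_all add: mult.assoc ttc, metis mult.assoc ttc)
  have pc2: "tt^p * (a * x) = a * (tt^p * x)" for p a x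
    by (metis mult.assoc pc)
  have z: "G A S l N j (Suc k0) l = 0" for j
    using assms(1) by (simp add: G_def KS_empty)
  have Esh: "E A S tt l N j k = G A S l N j k 0 + (\<Sum>q<l. tt^(Suc q) * G A S l N j k (Suc q))" for j k
    unfolding E_def atLeast0AtMost lessThan_Suc_atMost[symmetric] sum.lessThan_Suc_shift by simp
  have Esh2: "E A S tt l N j (k0+1) = (\<Sum>q<l. tt^q * G A S l N j (k0+1) q)" for j
    unfolding E_def atLeast0AtMost lessThan_Suc_atMost[symmetric] by (simp add: z)
  have Bs: "(\<Sum>j=i+1..N. E A S tt l N j (k0+1) * S i j) = (\<Sum>j=i+1..N. (\<Sum>q<l. tt^q * G A S l N j (k0+1) q) * S i j)"
    by (simp only: Esh2)
  have "E A S tt l N i k0 = A i (k0+1) * G A S l N i (k0+1) 0 +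
      (\<Sum>q<l. A i (k0+1) * (tt^(Suc q) * G A S l N i (k0+1) (Suc q)) + tt * (\<Sum>j=i+1..N. (tt^q * G A S l N j (k0+1) q) * S i j))"
    unfolding Esh G0[OF assms(1)] GSuc[OF assms(1)]
    by (intro arg_cong2[where f="(+)"] refl sum.cong)
       (simp_all add: distrib_left sum_distrib_left pc2 del: power_Suc, simp add: mult.assoc, intro sum.cong refl, metis mult.assoc pc2 power_Suc)
  also have "\<dots> = A i (k0+1) * E A S tt l N i (k0+1) + tt * (\<Sum>j=i+1..N. E A S tt l N j (k0+1) * S i j)"
    unfolding Esh[of i "k0+1"] sum.distrib Bs
    by (simp add: distrib_left sum_distrib_left sum_distrib_right sum.swap[of _ "{..<l}"] add.assoc)
  finally show ?thesis .
qed

lemma E_base: "E A S tt l N i l = 1"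
proof -
  have "(\<Sum>p=Suc 0..l. tt^p * G A S l N i l p) = 0"
    by (rule sum.neutral) (auto simp: G_def KS_empty)
  then show ?thesis unfolding E_def
    by (simp add: sum.atLeast_Suc_atMost G_def KS_0 iseqs_0 trm_nil)
qed


lemma cc_lem:
  fixes a b x :: "'a::ring_1"
  assumes "\<And>y. a * y = y * a" "\<And>y. b * y = y * b"
  shows "a * b * x = x * (a * b)"
proof -
  have e1: "b * x = x * b" by (rule assms(2))
  have e2: "a * x = x * a" by (rule assms(1))
  have "a * b * x = a * (b * x)" by (rule mult.assoc)
  also have "\<dots> = a * (x * b)" using e1 by (rule arg_cong)
  also have "\<dots> = (a * x) * b" by (rule mult.assoc[symmetric])
  also have "\<dots> = (x * a) * b" using e2 by (rule arg_cong)
  also have "\<dots> = x * (a * b)" by (rule mult.assoc)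
  finally show ?thesis .
qed

theorem lemma5p4:
  fixes emb :: "complex \<Rightarrow> 'a::ring_1"
    and hb tt :: 'a and c :: "nat \<Rightarrow> 'a"
    and T :: "(nat \<Rightarrow> nat) \<Rightarrow> 'a"
    and w X Xinv :: "nat \<Rightarrow> 'a"
    and N l i :: nat and eps :: complex
  assumes l: "l \<ge> 1"
    and eps_root: "eps ^ l = 1" and eps_prim: "\<And>m. 0 < m \<Longrightarrow> m < l \<Longrightarrow> eps ^ m \<noteq> 1"
    \<comment> \<open>emb: complex scalars, a ring homomorphism into the centre\<close>
    and emb_add: "\<And>a b. emb (a + b) = emb a + emb b"
    and emb_mult: "\<And>a b. emb (a * b) = emb a * emb b"
    and emb_one: "emb 1 = 1"
    and emb_central: "\<And>a x. emb a * x = x * emb a"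
    \<comment> \<open>hbar, t, c_m are central scalars\<close>
    and hb_central: "\<And>x. hb * x = x * hb"
    and tt_central: "\<And>x. tt * x = x * tt"
    and c_central: "\<And>m x. c m * x = x * c m"
    \<comment> \<open>the symmetric group S_N (permutations of {1..N}) acting through T\<close>
    and T_id: "T id = 1"
    and T_comp: "\<And>\<sigma> \<tau>. \<sigma> permutes {1..N} \<Longrightarrow> \<tau> permutes {1..N} \<Longrightarrow> T (\<sigma> \<circ> \<tau>) = T \<sigma> * T \<tau>"
    \<comment> \<open>relations among the w's and the X's\<close>
    and w_comm: "\<And>a b. a \<in> {1..N} \<Longrightarrow> b \<in> {1..N} \<Longrightarrow> w a * w b = w b * w a"
    and X_comm: "\<And>a b. a \<in> {1..N} \<Longrightarrow> b \<in> {1..N} \<Longrightarrow> X a * X b = X b * X a"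
    and X_inv1: "\<And>a. a \<in> {1..N} \<Longrightarrow> X a * Xinv a = 1"
    and X_inv2: "\<And>a. a \<in> {1..N} \<Longrightarrow> Xinv a * X a = 1"
    \<comment> \<open>s_a w relations, with s_a = T (transpose a (a+1))\<close>
    and sw1: "\<And>a. 1 \<le> a \<Longrightarrow> a < N \<Longrightarrow> T (transpose a (a+1)) * w a = w (a+1) * T (transpose a (a+1)) - tt"
    and sw2: "\<And>a. 1 \<le> a \<Longrightarrow> a < N \<Longrightarrow> T (transpose a (a+1)) * w (a+1) = w a * T (transpose a (a+1)) + tt"
    and sw3: "\<And>a b. 1 \<le> a \<Longrightarrow> a < N \<Longrightarrow> b \<in> {1..N} \<Longrightarrow> b \<noteq> a \<Longrightarrow> b \<noteq> a + 1 \<Longrightarrow>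
                T (transpose a (a+1)) * w b = w b * T (transpose a (a+1))"
    \<comment> \<open>sigma X_a^(+-1) = X_(sigma a)^(+-1) sigma\<close>
    and sX1: "\<And>\<sigma> a. \<sigma> permutes {1..N} \<Longrightarrow> a \<in> {1..N} \<Longrightarrow> T \<sigma> * X a = X (\<sigma> a) * T \<sigma>"
    and sX2: "\<And>\<sigma> a. \<sigma> permutes {1..N} \<Longrightarrow> a \<in> {1..N} \<Longrightarrow> T \<sigma> * Xinv a = Xinv (\<sigma> a) * T \<sigma>"
    \<comment> \<open>commutators [w_a, X_b]\<close>
    and wX1: "\<And>a b. a \<in> {1..N} \<Longrightarrow> b \<in> {1..N} \<Longrightarrow> a > b \<Longrightarrow>
                w a * X b - X b * w a = - (tt * X b * T (transpose b a))"
    and wX2: "\<And>a b. a \<in> {1..N} \<Longrightarrow> b \<in> {1..N} \<Longrightarrow> a < b \<Longrightarrow>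
                w a * X b - X b * w a = - (tt * X a * T (transpose a b))"
    and wX3: "\<And>a. a \<in> {1..N} \<Longrightarrow>
                w a * X a - X a * w a = - (hb * X a)
                  + tt * (\<Sum>k = 1..<a. X k * T (transpose k a))
                  + tt * (\<Sum>k = a+1..N. X a * T (transpose a k))"
    and i: "i \<in> {1..N}"
  shows "prod_list (map (\<lambda>k. w i - hb - zk emb hb c eps l k
                               + tt * (\<Sum>j = i+1..N. T (transpose i j))) [1..<l+1])
       = (\<Sum>p = 0..l. tt ^ p *
            (\<Sum>ks\<in>kseqs l p. \<Sum>js\<in>iseqs N i p.
               (let kk = (\<lambda>r. (0 # ks @ [l+1]) ! r); ii = (\<lambda>r. (i # js) ! r) in
                 prod_list (map (\<lambda>r. prod_list (map (\<lambda>k. w (ii r) - hb - zk emb hb c eps l k)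
                                                     [kk r + 1..<kk (r+1)])) [0..<p+1])
                 * prod_list (map (\<lambda>r. T (transpose (ii r) (ii (r+1)))) (rev [0..<p])))))"
proof -
  interpret hk T w tt N
    using T_id T_comp sw1 sw2 sw3 tt_central by unfold_locales auto
  define A' where "A' = (\<lambda>j k. w j - hb - zk emb hb c eps l k)"
  define S' where "S' = (\<lambda>a b. T (transpose a b))"
  define F where "F = (\<lambda>j K. prod_list (map (\<lambda>k. A' j k + tt * D j) K))"
  have zc: "zk emb hb c eps l k * x = x * zk emb hb c eps l k" for k x
  proof -
    let ?S = "(\<Sum>m = 1..<l. emb (\<Sum>q<k. eps ^ (q * m)) * c m)"
    let ?Y = "of_nat (l - k) * hb + ?S"
    have y1: "of_nat (l-k) * hb * x = x * (of_nat (l-k) * hb)" for x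
      by (rule cc_lem) (simp_all add: mult_of_nat_commute hb_central)
    have y2: "?S * x = x * ?S" for x
      unfolding sum_distrib_left sum_distrib_right
      by (rule sum.cong[OF refl], rule cc_lem) (simp_all add: emb_central c_central)
    have Yc: "?Y * x = x * ?Y" for x by (simp only: distrib_left distrib_right y1 y2)
    have "emb (1 / of_nat l) * ?Y * x = x * (emb (1 / of_nat l) * ?Y)"
      by (rule cc_lem[OF emb_central Yc])
    then show ?thesis unfolding zk_def by (simp only: mult_minus_left mult_minus_right)
  qed
  have comm1: "S' i' j * (A' i' k + tt * D i') = (A' j k + tt * D j) * S' i' j"
    if "i' \<in> {1..N}" "j \<in> {1..N}" "i' < j" for i' j k
  proof -
    have e: "A' a k + tt * D a = (w a + tt * D a) - hb - zk emb hb c eps l k" for a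
      unfolding A'_def by (simp add: algebra_simps)
    show ?thesis
      unfolding e using key[OF that] hb_central zc
      by (simp add: S'_def s_def right_diff_distrib left_diff_distrib)
  qed
  have commF: "S' i' j * F i' K = F j K * S' i' j"
    if "i' \<in> {1..N}" "j \<in> {1..N}" "i' < j" for i' j K
  proof (induction K)
    case Nil
    then show ?case by (simp add: F_def)
  next
    case (Cons k K)
    have "S' i' j * F i' (k # K) = (S' i' j * (A' i' k + tt * D i')) * F i' K"
      by (simp add: F_def mult.assoc)
    also have "\<dots> = (A' j k + tt * D j) * (S' i' j * F i' K)"
      by (simp add: comm1[OF that] mult.assoc)
    also have "\<dots> = F j (k # K) * S' i' j" using Cons.IH by (simp add: F_def mult.assoc)
    finally show ?case .
  qed
  have Frec: "F i' (k # K) = A' i' k * F i' K + tt * (\<Sum>j=i'+1..N. F j K * S' i' j)"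
    if "i' \<in> {1..N}" for i' k K
  proof -
    have "D i' * F i' K = (\<Sum>j=i'+1..N. F j K * S' i' j)"
      unfolding D_def sum_distrib_right
    proof (rule sum.cong[OF refl])
      fix j assume "j \<in> {i'+1..N}"
      then show "s i' j * F i' K = F j K * S' i' j"
        using commF[of i' j K] that by (simp add: S'_def s_def)
    qed
    then show ?thesis by (simp add: F_def distrib_right mult.assoc)
  qed
  have main: "\<forall>i'\<in>{1..N}. F i' [l - d + 1..<l+1] = E A' S' tt l N i' (l - d)" if "d \<le> l" for d
    using that
  proof (induction d)
    case 0
    then show ?case by (simp add: F_def E_base)
  next
    case (Suc d)
    let ?k = "l - Suc d"
    have k1: "?k + 1 = l - d" "?k < l" using Suc.prems by auto
    have up: "[?k + 1..<l+1] = (?k+1) # [l - d + 1..<l+1]"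
    proof -
      have k2: "Suc (l - Suc d) = l - d" using Suc.prems by simp
      show ?thesis using Suc.prems by (simp add: upt_conv_Cons k2 del: upt_Suc)
    qed
    show ?case
    proof
      fix i' assume i': "i' \<in> {1..N}"
      have IH0: "F j [l - d + 1..<l+1] = E A' S' tt l N j (l - d)" if "j \<in> {1..N}" for j
        using Suc that by auto
      have IH: "F j [Suc (l - d)..<Suc l] = E A' S' tt l N j (l - d)" if "j \<in> {1..N}" for j
        using IH0[OF that] by simp
      have "F i' [?k + 1..<l+1] = A' i' (?k+1) * F i' [l - d + 1..<l+1]
            + tt * (\<Sum>j=i'+1..N. F j [l - d + 1..<l+1] * S' i' j)"
        unfolding up using Frec[OF i'] .
      also have "\<dots> = A' i' (?k+1) * E A' S' tt l N i' (?k+1) + tt * (\<Sum>j=i'+1..N. E A' S' tt l N j (?k+1) * S' i' j)"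
        using i' Suc.prems by (simp add: IH Suc_diff_Suc del: upt_Suc)
      also have "\<dots> = E A' S' tt l N i' ?k"
        using E_rec[OF k1(2) tt_central] by simp
      finally show "F i' [?k + 1..<l+1] = E A' S' tt l N i' ?k" .
    qed
  qed
  have L: "prod_list (map (\<lambda>k. w i - hb - zk emb hb c eps l k
                               + tt * (\<Sum>j = i+1..N. T (transpose i j))) [1..<l+1]) = F i [0+1..<l+1]"
    by (simp add: F_def A'_def D_def s_def)
  also have "\<dots> = E A' S' tt l N i 0" using main[of l] i by simp
  also have "\<dots> = (\<Sum>p = 0..l. tt ^ p *
            (\<Sum>ks\<in>kseqs l p. \<Sum>js\<in>iseqs N i p.
               (let kk = (\<lambda>r. (0 # ks @ [l+1]) ! r); ii = (\<lambda>r. (i # js) ! r) in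
                 prod_list (map (\<lambda>r. prod_list (map (\<lambda>k. w (ii r) - hb - zk emb hb c eps l k)
                                                     [kk r + 1..<kk (r+1)])) [0..<p+1])
                 * prod_list (map (\<lambda>r. T (transpose (ii r) (ii (r+1)))) (rev [0..<p])))))"
  proof -
    have ke: "kseqs l p = KS l 0 p" for p by (simp add: kseqs_def KS_def)
    show ?thesis unfolding E_def G_def ke
      by (intro sum.cong refl arg_cong2[where f="(*)"]) (auto simp: trm_def KS_def A'_def S'_def)
  qed
  finally show ?thesis .
qed

end
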